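(* Let $B$ be a nonzero real vector space and $\lfloor\cdot,\cdot\rfloor\colon B\times B\to\mathbb{R}$ a symmetric bilinear form, and put $q(b):=\tfrac12\lfloor b,b\rfloor$. Let $f\colon B\to\,]{-}\infty,\infty]$ be proper and convex with $f\ge q$ on $B$. Then $f^@=q$ on ${\cal P}_q(f)$.
   Context: Here $f^@$ is the Fenchel conjugate of $f$ with respect to $\lfloor\cdot,\cdot\rfloor$: $f^@(c):=\sup_{b\in B}\big[\lfloor b,c\rfloor-f(b)\big]$ for $c\in B$. For $f\ge q$, ${\cal P}_q(f):=\{b\in B\colon f(b)=q(b)\}$. "Proper" means $f$ is not identically $\infty$. *)

theory Defs
  imports "HOL-Analysis.Analysis"
begin

text \<open>Convexity of an extended-real valued function with values in ]-\<infinity>,\<infinity>]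
  (no value -\<infinity>, so the ereal arithmetic below is unambiguous).\<close>
definition ereal_convex_fun :: "('a::real_vector \<Rightarrow> ereal) \<Rightarrow> bool" where
  "ereal_convex_fun f \<longleftrightarrow>
     (\<forall>x y (t::real). 0 < t \<and> t < 1 \<longrightarrow>
        f (t *\<^sub>R x + (1 - t) *\<^sub>R y) \<le> ereal t * f x + ereal (1 - t) * f y)"

definition fenchel_conj :: "('a \<Rightarrow> 'a \<Rightarrow> real) \<Rightarrow> ('a \<Rightarrow> ereal) \<Rightarrow> 'a \<Rightarrow> ereal" where
  "fenchel_conj s f c = (SUP b. ereal (s b c) - f b)"

definition qform :: "('a \<Rightarrow> 'a \<Rightarrow> real) \<Rightarrow> 'a \<Rightarrow> real" where
  "qform s b = s b b / 2"

end

theory Submission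
  imports Defs
begin

lemma small_lemma:
  fixes x K :: real
  assumes "\<And>t. 0 < t \<Longrightarrow> t < 1 \<Longrightarrow> x \<ge> t * K"
  shows "x \<ge> 0"
proof (rule ccontr)
  assume "\<not> x \<ge> 0"
  hence x: "x < 0" by simp
  define t where "t = min (1/2) (-x / (2 * (\<bar>K\<bar> + 1)))"
  have "x / (2 * (\<bar>K\<bar> + 1)) < 0" using x by (intro divide_neg_pos) auto
  hence t0: "0 < t" by (simp add: t_def)
  have t1: "t < 1" by (simp add: t_def)
  have "t * (\<bar>K\<bar> + 1) \<le> (-x / (2 * (\<bar>K\<bar> + 1))) * (\<bar>K\<bar> + 1)"
    by (rule mult_right_mono) (auto simp: t_def)
  also have "\<dots> = -x/2" by (simp add: field_simps)
  finally have "t * (\<bar>K\<bar>+1) \<le> -x/2" .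
  moreover have "t * K \<ge> - (t * \<bar>K\<bar>)" using t0
    by (metis abs_ge_minus_self abs_mult abs_of_pos minus_le_iff)
  ultimately have "t * K > x" using x t0 by (simp add: algebra_simps)
  with assms[OF t0 t1] show False by simp
qed

theorem lemma3p7:
  fixes s :: "'a::real_vector \<Rightarrow> 'a \<Rightarrow> real" and f :: "'a \<Rightarrow> ereal"
  assumes nonzero: "\<exists>x::'a. x \<noteq> 0"
    and bil: "bilinear s"
    and sym: "\<And>x y. s x y = s y x"
    and nominf: "\<And>x. f x \<noteq> -\<infinity>"
    and proper: "\<exists>x. f x \<noteq> \<infinity>"
    and conv: "ereal_convex_fun f"
    and ge: "\<And>x. ereal (qform s x) \<le> f x"
  shows "\<forall>b \<in> {b. f b = ereal (qform s b)}. fenchel_conj s f b = ereal (qform s b)"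
proof
  fix b assume "b \<in> {b. f b = ereal (qform s b)}"
  hence fb: "f b = ereal (s b b / 2)" by (simp add: qform_def)
  have expand: "s (t *\<^sub>R c + (1 - t) *\<^sub>R b) (t *\<^sub>R c + (1 - t) *\<^sub>R b)
      = t*t * s c c + 2*t*(1-t) * s b c + (1-t)*(1-t) * s b b" for t c
  proof -
    have "s (t *\<^sub>R c + (1 - t) *\<^sub>R b) (t *\<^sub>R c + (1 - t) *\<^sub>R b)
      = t*t * s c c + t*(1-t) * s c b + (1-t)*t * s b c + (1-t)*(1-t) * s b b"
      by (simp only: bilinear_ladd[OF bil] bilinear_radd[OF bil] bilinear_lmul[OF bil] bilinear_rmul[OF bil]) (simp add: algebra_simps)
    thus ?thesis using sym[of c b] by (simp add: algebra_simps)
  qed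
  have key: "ereal (s c b) - f c \<le> ereal (s b b / 2)" for c
  proof (cases "f c")
    case (real fc)
    have "fc \<ge> s b c - s b b/2 + t * (s c c/2 - s b c + s b b/2)" if t: "0<t" "t<1" for t
    proof -
      have "ereal (qform s (t *\<^sub>R c + (1 - t) *\<^sub>R b)) \<le> f (t *\<^sub>R c + (1 - t) *\<^sub>R b)"
        by (rule ge)
      also have "\<dots> \<le> ereal t * f c + ereal (1 - t) * f b"
        using conv t unfolding ereal_convex_fun_def by blast
      also have "\<dots> = ereal (t * fc + (1-t) * (s b b / 2))" using real fb by simp
      finally have "(t*t * s c c + 2*t*(1-t) * s b c + (1-t)*(1-t) * s b b)/2
                     \<le> t * fc + (1-t) * (s b b / 2)"
        by (simp add: qform_def expand)
      hence "t * (t * s c c/2 + (1-t) * s b c - (1-t) * s b b/2) \<le> t * fc"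
        by (simp add: field_simps power2_eq_square)
      hence "t * s c c/2 + (1-t) * s b c - (1-t) * s b b/2 \<le> fc" using t by simp
      thus ?thesis by (simp add: algebra_simps diff_divide_distrib)
    qed
    hence "fc - (s b c - s b b/2) \<ge> 0"
      by (intro small_lemma[where K="s c c/2 - s b c + s b b/2"]) (simp add: algebra_simps)
    thus ?thesis using real sym[of c b] by simp
  next
    case PInf thus ?thesis by simp
  next
    case MInf thus ?thesis using nominf by simp
  qed
  have "fenchel_conj s f b \<le> ereal (s b b / 2)"
    unfolding fenchel_conj_def by (rule SUP_least) (rule key)
  moreover have "ereal (s b b) - f b \<le> fenchel_conj s f b"
    unfolding fenchel_conj_def by (rule SUP_upper) simp
  moreover have "ereal (s b b) - f b = ereal (s b b / 2)" using fb by simp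
  ultimately show "fenchel_conj s f b = ereal (qform s b)"
    by (simp add: qform_def)
qed

end
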